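(* Assume $n\ge 3t+1$. In any execution of COOL, $\eta^{[2]}\le 2$.
   Context: Setting. $n$ processors indexed by $[1:n]$, pairwise joined by reliable private synchronous channels; recipients know senders. At most $t$ processors are dishonest, controlled by an adversary who may make them deviate arbitrarily (missing values replaced by a fixed default); the others are honest. Processor $i$ holds an $\ell$-bit initial message $\boldsymbol w_i$. $\phi$ is a default value different from every $\ell$-bit message. Logarithms are base 2. Code. $k=\lfloor t/5\rfloor+1$, $c=\lceil \max\{\ell,(t/5+1)\log(n+1)\}/k\rceil$. Messages are zero-padded to $kc$ bits and viewed in $GF(2^c)^k$. Integers in $[1:n]$ are identified with distinct nonzero elements of $GF(2^c)$; $\boldsymbol h_i\in GF(2^c)^k$ has entries $h_{i,j}=\prod_{p\in[1:k],\,p\ne j}\frac{i-p}{j-p}$ (field arithmetic). COOL, Phases 1–2 (honest processor $i$). Initialization: updated message $\boldsymbol w^{(i)}:=\boldsymbol w_i$, $y^{(i)}_j:=\boldsymbol h_j^{\mathsf T}\boldsymbol w_i$, $u_i(i):=1$. Phase 1. (a) Send $(y^{(i)}_j,y^{(i)}_i)$ to each $j\ne i$. (b) For $j\ne i$, link indicator $u_i(j):=1$ if the pair received from $j$ equals $(y^{(i)}_i,y^{(i)}_j)$, else $0$. Success indicator $s_i:=1$ if $\sum_{j=1}^n u_i(j)\ge n-t$; otherwise $s_i:=0$ and $\boldsymbol w^{(i)}:=\phi$. (c) Send $s_i$ to all; each processor records the indicator received from each $j$ (own for itself) and forms $\mathcal S_1=\{j:s_j=1\}$, $\mathcal S_0=\{j:s_j=0\}$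 (views may differ between processors). Phase 2. If $s_i=1$: set $u_i(j):=0$ for all $j\in\mathcal S_0$; if now $\sum_j u_i(j)<n-t$, set $s_i:=0$, $\boldsymbol w^{(i)}:=\phi$ and send $s_i=0$ to all. Everyone overwrites recorded indicators with newly received ones and recomputes $\mathcal S_0,\mathcal S_1$. Notation. For $p\in\{1,2\}$, $s^{[p]}_i$ is the value of honest processor $i$'s success indicator at the end of Phase $p$, and $\eta^{[p]}$ is the number of distinct values in $\{\boldsymbol w_i: i\text{ honest},\ s^{[p]}_i=1\}$ (initial messages). *)

theory Defs
  imports Complex_Main
begin

definition kpar :: "nat \<Rightarrow> nat" where
  "kpar t = t div 5 + 1"

definition cpar :: "nat \<Rightarrow> nat \<Rightarrow> nat \<Rightarrow> nat" where
  "cpar l t n = nat \<lceil> max (real l) ((real t / 5 + 1) * log 2 (real n + 1)) / real (kpar t) \<rceil>"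

definition hcoef :: "(nat \<Rightarrow> 'f::field) \<Rightarrow> nat \<Rightarrow> nat \<Rightarrow> nat \<Rightarrow> 'f" where
  "hcoef \<alpha> k i j = (\<Prod>p\<in>{1..k} - {j}. (\<alpha> i - \<alpha> p) / (\<alpha> j - \<alpha> p))"

text \<open>Zero-pad an l-bit message to k*c bits and split into k chunks of c bits;
  each chunk is mapped to GF(2^c) via the bijection beta.  Result: list of length k
  (coordinate m, 1-based, is entry m-1).\<close>
definition encode :: "(bool list \<Rightarrow> 'f) \<Rightarrow> nat \<Rightarrow> nat \<Rightarrow> bool list \<Rightarrow> 'f list" where
  "encode \<beta> c k w =
     (let pw = w @ replicate (k * c - length w) False
      in map (\<lambda>m. \<beta> (take c (drop (m * c) pw))) [0..<k])"

definition codesym :: "(nat \<Rightarrow> 'f::field) \<Rightarrow> (bool list \<Rightarrow> 'f) \<Rightarrow> nat \<Rightarrow> nat \<Rightarrow> bool list \<Rightarrow> nat \<Rightarrow> 'f" where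
  "codesym \<alpha> \<beta> c k msg j = (\<Sum>m\<in>{1..k}. hcoef \<alpha> k j m * (encode \<beta> c k msg ! (m - 1)))"

definition coolY :: "nat \<Rightarrow> nat \<Rightarrow> nat \<Rightarrow> (nat \<Rightarrow> 'f::field) \<Rightarrow> (bool list \<Rightarrow> 'f)
    \<Rightarrow> (nat \<Rightarrow> bool list) \<Rightarrow> nat \<Rightarrow> nat \<Rightarrow> 'f" where
  "coolY l t n \<alpha> \<beta> w i j = codesym \<alpha> \<beta> (cpar l t n) (kpar t) (w i) j"

text \<open>Pair received by processor i from processor j in Phase 1(a):
  honest j sends (y^{(j)}_i, y^{(j)}_j); dishonest j sends an arbitrary pair adv1 j i.\<close>
definition recv1 :: "(nat \<Rightarrow> nat \<Rightarrow> 'f) \<Rightarrow> nat set \<Rightarrow> (nat \<Rightarrow> nat \<Rightarrow> 'f \<times> 'f) \<Rightarrow> nat \<Rightarrow> nat \<Rightarrow> 'f \<times> 'f" where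
  "recv1 Y H adv1 j i = (if j \<in> H then (Y j i, Y j j) else adv1 j i)"

definition link1 :: "(nat \<Rightarrow> nat \<Rightarrow> 'f) \<Rightarrow> nat set \<Rightarrow> (nat \<Rightarrow> nat \<Rightarrow> 'f \<times> 'f) \<Rightarrow> nat \<Rightarrow> nat \<Rightarrow> bool" where
  "link1 Y H adv1 i j = (j = i \<or> recv1 Y H adv1 j i = (Y i i, Y i j))"

definition succ1 :: "nat \<Rightarrow> nat \<Rightarrow> (nat \<Rightarrow> nat \<Rightarrow> 'f) \<Rightarrow> nat set \<Rightarrow> (nat \<Rightarrow> nat \<Rightarrow> 'f \<times> 'f) \<Rightarrow> nat \<Rightarrow> bool" where
  "succ1 n t Y H adv1 i = (card {j \<in> {1..n}. link1 Y H adv1 i j} \<ge> n - t)"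

text \<open>Indicator of j as recorded by processor i in Phase 1(c): honest j sends its true s_j
  (own value when j = i); dishonest j sends an arbitrary bit adv2 j i.\<close>
definition view1 :: "nat \<Rightarrow> nat \<Rightarrow> (nat \<Rightarrow> nat \<Rightarrow> 'f) \<Rightarrow> nat set \<Rightarrow> (nat \<Rightarrow> nat \<Rightarrow> 'f \<times> 'f)
    \<Rightarrow> (nat \<Rightarrow> nat \<Rightarrow> bool) \<Rightarrow> nat \<Rightarrow> nat \<Rightarrow> bool" where
  "view1 n t Y H adv1 adv2 i j = (if j \<in> H then succ1 n t Y H adv1 j else adv2 j i)"

text \<open>Success indicator at the end of Phase 2: links to j in S_0 are cut.\<close>
definition succ2 :: "nat \<Rightarrow> nat \<Rightarrow> (nat \<Rightarrow> nat \<Rightarrow> 'f) \<Rightarrow> nat set \<Rightarrow> (nat \<Rightarrow> nat \<Rightarrow> 'f \<times> 'f)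
    \<Rightarrow> (nat \<Rightarrow> nat \<Rightarrow> bool) \<Rightarrow> nat \<Rightarrow> bool" where
  "succ2 n t Y H adv1 adv2 i =
     (succ1 n t Y H adv1 i \<and>
      card {j \<in> {1..n}. link1 Y H adv1 i j \<and> view1 n t Y H adv1 adv2 i j} \<ge> n - t)"

end

theory Submission imports Defs "HOL-Computational_Algebra.Polynomial" begin

definition lagp :: "(nat \<Rightarrow> 'f::field) \<Rightarrow> nat \<Rightarrow> nat \<Rightarrow> 'f poly" where
  "lagp \<alpha> K m = (\<Prod>p\<in>{1..K} - {m}. [:- \<alpha> p / (\<alpha> m - \<alpha> p), 1 / (\<alpha> m - \<alpha> p):])"

lemma poly_lagp: "poly (lagp \<alpha> K m) (\<alpha> j) = hcoef \<alpha> K j m"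
  unfolding lagp_def hcoef_def poly_prod
  by (rule prod.cong) (auto simp: diff_divide_distrib)

lemma degree_lagp:
  assumes "m \<in> {1..K}"
  shows "degree (lagp \<alpha> K m) \<le> K - 1"
proof -
  have "degree (lagp \<alpha> K m) \<le> sum (degree \<circ> (\<lambda>p. [:- \<alpha> p / (\<alpha> m - \<alpha> p), 1 / (\<alpha> m - \<alpha> p):])) ({1..K} - {m})"
    unfolding lagp_def by (rule degree_prod_sum_le) simp
  also have "\<dots> \<le> sum (\<lambda>p. 1) ({1..K} - {m})"
    by (rule sum_mono) simp
  also have "\<dots> \<le> K - 1" using assms by simp
  finally show ?thesis .
qed

lemma hcoef_delta:
  fixes \<alpha> :: "nat \<Rightarrow> 'f::field"
  assumes inj: "inj_on \<alpha> {1..K}" and m: "m \<in> {1..K}" and m': "m' \<in> {1..K}"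
  shows "hcoef \<alpha> K m' m = (if m = m' then 1 else 0)"
proof (cases "m = m'")
  case True
  have "hcoef \<alpha> K m' m = (\<Prod>p\<in>{1..K} - {m}. 1)"
    unfolding hcoef_def
  proof (rule prod.cong)
    fix p assume "p \<in> {1..K} - {m}"
    hence "\<alpha> m \<noteq> \<alpha> p" using inj m by (auto dest: inj_onD)
    thus "(\<alpha> m' - \<alpha> p) / (\<alpha> m - \<alpha> p) = 1" using True by simp
  qed simp
  thus ?thesis using True by simp
next
  case False
  have "(\<Prod>p\<in>{1..K} - {m}. (\<alpha> m' - \<alpha> p) / (\<alpha> m - \<alpha> p)) = 0"
    using False m' by (subst prod_zero_iff) auto
  thus ?thesis using False unfolding hcoef_def by simp
qed

lemma interp_diff:
  fixes \<alpha> :: "nat \<Rightarrow> 'f::field" and x y :: "nat \<Rightarrow> 'f"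
  assumes inj: "inj_on \<alpha> {1..n}" and Kn: "K \<le> n"
    and ex: "\<exists>m\<in>{1..K}. x m \<noteq> y m"
  shows "card {j\<in>{1..n}. (\<Sum>m\<in>{1..K}. hcoef \<alpha> K j m * x m) = (\<Sum>m\<in>{1..K}. hcoef \<alpha> K j m * y m)} \<le> K - 1"
proof -
  define D where "D = (\<Sum>m\<in>{1..K}. smult (x m - y m) (lagp \<alpha> K m))"
  have polyD: "poly D (\<alpha> j) = (\<Sum>m\<in>{1..K}. hcoef \<alpha> K j m * x m) - (\<Sum>m\<in>{1..K}. hcoef \<alpha> K j m * y m)" for j
    unfolding D_def poly_sum poly_smult poly_lagp sum_subtractf[symmetric]
    by (rule sum.cong) (auto simp: algebra_simps)
  have injK: "inj_on \<alpha> {1..K}" by (rule inj_on_subset[OF inj]) (use Kn in auto)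
  obtain m0 where m0: "m0 \<in> {1..K}" "x m0 \<noteq> y m0" using ex by blast
  have "poly D (\<alpha> m0) = (\<Sum>m\<in>{1..K}. (if m = m0 then 1 else 0) * x m) - (\<Sum>m\<in>{1..K}. (if m = m0 then 1 else 0) * y m)"
    unfolding polyD using hcoef_delta[OF injK _ m0(1)] by simp
  also have "\<dots> = x m0 - y m0"
  proof -
    have "(\<Sum>m\<in>{1..K}. (if m = m0 then 1 else 0) * x m) = (\<Sum>m\<in>{1..K}. if m = m0 then x m else 0)"
      "(\<Sum>m\<in>{1..K}. (if m = m0 then 1 else 0) * y m) = (\<Sum>m\<in>{1..K}. if m = m0 then y m else 0)"
      by (rule sum.cong; simp)+
    moreover have "(\<Sum>m\<in>{1..K}. if m = m0 then z m else 0) = z m0" for z :: "nat \<Rightarrow> 'f"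
      using m0(1) by (simp add: sum.delta)
    ultimately show ?thesis by simp
  qed
  finally have "poly D (\<alpha> m0) \<noteq> 0" using m0 by simp
  hence D0: "D \<noteq> 0" by auto
  have degD: "degree D \<le> K - 1"
    unfolding D_def
  proof (rule degree_sum_le)
    fix p assume p: "p \<in> {1..K}"
    show "degree (smult (x p - y p) (lagp \<alpha> K p)) \<le> K - 1"
      using degree_lagp[OF p, of \<alpha>] degree_smult_le[of "x p - y p" "lagp \<alpha> K p"] by linarith
  qed simp
  have sub: "{j\<in>{1..n}. (\<Sum>m\<in>{1..K}. hcoef \<alpha> K j m * x m) = (\<Sum>m\<in>{1..K}. hcoef \<alpha> K j m * y m)}
      = {j\<in>{1..n}. poly D (\<alpha> j) = 0}" (is "?A = ?B") using polyD by auto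
  have "card ?B = card (\<alpha> ` ?B)"
    by (rule card_image[symmetric]) (rule inj_on_subset[OF inj], auto)
  also have "\<dots> \<le> card {z. poly D z = 0}"
    by (rule card_mono) (auto simp: poly_roots_finite D0)
  also have "\<dots> \<le> degree D" by (rule card_poly_roots_bound[OF D0])
  finally show ?thesis using sub degD by simp
qed

lemma chunks_eq:
  fixes xs ys :: "'a list"
  assumes "length xs = K * C" "length ys = K * C"
    and "\<forall>m<K. take C (drop (m * C) xs) = take C (drop (m * C) ys)"
  shows "xs = ys"
proof (rule nth_equalityI)
  show "length xs = length ys" using assms by simp
  fix i assume i: "i < length xs"
  hence iK: "i < K * C" using assms by simp
  hence C0: "C > 0" by (cases C) auto
  define m where "m = i div C"
  define r where "r = i mod C"
  have mK: "m < K" using iK C0 unfolding m_def by (simp add: less_mult_imp_div_less)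
  have rC: "r < C" using C0 unfolding r_def by simp
  have ii: "i = m * C + r" unfolding m_def r_def by simp
  have "m * C \<le> K * C" using mK by simp
  have mC: "m * C \<le> length xs" "m * C \<le> length ys" using mK assms(1,2) by auto
  have "xs ! i = take C (drop (m * C) xs) ! r"
    using rC ii mC by simp
  also have "\<dots> = take C (drop (m * C) ys) ! r" using assms(3) mK by simp
  also have "\<dots> = ys ! i"
    using rC ii mC by simp
  finally show "xs ! i = ys ! i" .
qed

lemma encode_diff:
  assumes bij: "inj_on \<beta> {xs. length xs = C}"
    and len: "length u = l" "length v = l" and lKC: "l \<le> K * C" and uv: "u \<noteq> v"
  shows "\<exists>m\<in>{1..K}. encode \<beta> C K u ! (m - 1) \<noteq> encode \<beta> C K v ! (m - 1)"
proof (rule ccontr)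
  assume "\<not> ?thesis"
  hence eq: "\<forall>m\<in>{1..K}. encode \<beta> C K u ! (m - 1) = encode \<beta> C K v ! (m - 1)" by blast
  define pu where "pu = u @ replicate (K * C - length u) False"
  define pv where "pv = v @ replicate (K * C - length v) False"
  have lpu: "length pu = K * C" and lpv: "length pv = K * C"
    using len lKC unfolding pu_def pv_def by auto
  have "\<forall>m<K. take C (drop (m * C) pu) = take C (drop (m * C) pv)"
  proof (intro allI impI)
    fix m assume mK: "m < K"
    have "Suc m * C \<le> K * C" using mK by (intro mult_le_mono1) simp
    hence CC: "C \<le> K * C - m * C" by simp
    have "encode \<beta> C K u ! m = encode \<beta> C K v ! m" using eq[rule_format, of "Suc m"] mK by simp
    hence b1: "\<beta> (take C (drop (m * C) pu)) = \<beta> (take C (drop (m * C) pv))"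
      using mK unfolding encode_def pu_def pv_def Let_def by simp
    have b2: "length (take C (drop (m * C) pu)) = C" using lpu CC by simp
    have b3: "length (take C (drop (m * C) pv)) = C" using lpv CC by simp
    show "take C (drop (m * C) pu) = take C (drop (m * C) pv)"
      by (rule inj_onD[OF bij b1]) (use b2 b3 in simp_all)
  qed
  hence "pu = pv" by (rule chunks_eq[OF lpu lpv])
  hence "take l pu = take l pv" by simp
  hence "u = v" using len unfolding pu_def pv_def by simp
  thus False using uv by simp
qed

lemma card3_union:
  assumes "finite A" "finite B" "finite C"
  shows "card A + card B + card C \<le> card (A \<union> B \<union> C) + card (A \<inter> B) + card (A \<inter> C) + card (B \<inter> C)"
proof -
  have fAB: "finite (A \<union> B)" using assms(1,2) by (rule finite_UnI)
  have 1: "card A + card B = card (A \<union> B) + card (A \<inter> B)" by (rule card_Un_Int[OF assms(1,2)])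
  have 2: "card (A \<union> B) + card C = card (A \<union> B \<union> C) + card ((A \<union> B) \<inter> C)"
    by (rule card_Un_Int[OF fAB assms(3)])
  have e: "(A \<union> B) \<inter> C = (A \<inter> C) \<union> (B \<inter> C)" by blast
  have 3: "card ((A \<union> B) \<inter> C) \<le> card (A \<inter> C) + card (B \<inter> C)" unfolding e by (rule card_Un_le)
  from 1 2 3 show ?thesis by linarith
qed

theorem lemma11:
  fixes n t l :: nat
    and \<alpha> :: "nat \<Rightarrow> 'f::{field,finite}"
    and \<beta> :: "bool list \<Rightarrow> 'f"
    and H :: "nat set"
    and w :: "nat \<Rightarrow> bool list"
    and adv1 :: "nat \<Rightarrow> nat \<Rightarrow> 'f \<times> 'f"
    and adv2 :: "nat \<Rightarrow> nat \<Rightarrow> bool"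
  assumes "n \<ge> 3 * t + 1"
    and "card (UNIV :: 'f set) = 2 ^ cpar l t n"
    and "bij_betw \<beta> {xs. length xs = cpar l t n} UNIV"
    and "inj_on \<alpha> {1..n}"
    and "\<forall>i\<in>{1..n}. \<alpha> i \<noteq> 0"
    and "H \<subseteq> {1..n}"
    and "card ({1..n} - H) \<le> t"
    and "\<forall>i\<in>H. length (w i) = l"
  shows "card {w i | i. i \<in> H \<and> succ2 n t (coolY l t n \<alpha> \<beta> w) H adv1 adv2 i} \<le> 2"
proof (rule ccontr)
  assume neg: "\<not> ?thesis"
  define K where "K = kpar t"
  define C where "C = cpar l t n"
  define Y where "Y = coolY l t n \<alpha> \<beta> w"
  define cw where "cw v j = codesym \<alpha> \<beta> C K v j" for v j
  have Yeq: "Y i j = cw (w i) j" for i j unfolding Y_def cw_def coolY_def C_def K_def by simp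
  have K1: "K - 1 = t div 5" unfolding K_def kpar_def by simp
  have Kpos: "K > 0" unfolding K_def kpar_def by simp
  have Kn: "K \<le> n" using assms(1) unfolding K_def kpar_def by linarith
  have lKC: "l \<le> K * C"
  proof -
    define M where "M = max (real l) ((real t / 5 + 1) * log 2 (real n + 1))"
    have "M / real K \<le> real C" unfolding C_def cpar_def M_def K_def
      by (rule real_nat_ceiling_ge)
    moreover have "real l \<le> M" unfolding M_def by simp
    ultimately have "real l / real K \<le> real C"
      using Kpos by (meson divide_right_mono of_nat_0_le_iff order.trans)
    hence "real l \<le> real K * real C" using Kpos by (simp add: divide_le_eq mult.commute)
    thus ?thesis by (simp flip: of_nat_mult)
  qed
  have injb: "inj_on \<beta> {xs. length xs = C}" using assms(3) unfolding C_def bij_betw_def by blast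
  have agree: "card {j\<in>{1..n}. cw u j = cw v j} \<le> K - 1"
    if "length u = l" "length v = l" "u \<noteq> v" for u v
  proof -
    have "\<exists>m\<in>{1..K}. encode \<beta> C K u ! (m - 1) \<noteq> encode \<beta> C K v ! (m - 1)"
      by (rule encode_diff[OF injb that(1,2) lKC that(3)])
    from interp_diff[OF assms(4) Kn this] show ?thesis
      unfolding cw_def codesym_def .
  qed
  define T where "T i = {z \<in> H. Y z z = cw (w i) z}" for i
  have finH: "finite H" by (rule finite_subset[OF assms(6)]) simp
  have finT: "finite (T i)" for i unfolding T_def using finH by simp
  define d where "d = card ({1..n} - H)"
  have hd: "card H + d = n"
    unfolding d_def using assms(6) card_Diff_subset[OF finH assms(6)] card_mono[OF _ assms(6)] by simp
  have lowT: "n - t \<le> card (T i) + d" if i: "i \<in> H" "succ1 n t Y H adv1 i" for i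
  proof -
    have "{j \<in> {1..n}. link1 Y H adv1 i j} \<subseteq> ({1..n} - H) \<union> T i"
    proof
      fix j assume j: "j \<in> {j \<in> {1..n}. link1 Y H adv1 i j}"
      show "j \<in> ({1..n} - H) \<union> T i"
      proof (cases "j \<in> H")
        case True
        show ?thesis
        proof (cases "j = i")
          case True then show ?thesis using i unfolding T_def by (simp add: Yeq)
        next
          case False
          hence "recv1 Y H adv1 j i = (Y i i, Y i j)" using j unfolding link1_def by simp
          hence "Y j j = Y i j" using \<open>j \<in> H\<close> unfolding recv1_def by simp
          thus ?thesis using \<open>j \<in> H\<close> unfolding T_def by (simp add: Yeq)
        qed
      qed (use j in auto)
    qed
    hence "card {j \<in> {1..n}. link1 Y H adv1 i j} \<le> card (({1..n} - H) \<union> T i)"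
      by (rule card_mono[rotated]) (simp add: finT)
    also have "\<dots> \<le> d + card (T i)" unfolding d_def by (rule card_Un_le)
    finally show ?thesis using i(2) unfolding succ1_def by linarith
  qed
  have interT: "card (T i \<inter> T i') \<le> K - 1" if "i \<in> H" "i' \<in> H" "w i \<noteq> w i'" for i i'
  proof -
    have "T i \<inter> T i' \<subseteq> {j\<in>{1..n}. cw (w i) j = cw (w i') j}"
      unfolding T_def using assms(6) by auto
    hence "card (T i \<inter> T i') \<le> card {j\<in>{1..n}. cw (w i) j = cw (w i') j}"
      by (rule card_mono[rotated]) simp
    also have "\<dots> \<le> K - 1" using agree that assms(8) by simp
    finally show ?thesis .
  qed
  let ?M = "{w i | i. i \<in> H \<and> succ2 n t (coolY l t n \<alpha> \<beta> w) H adv1 adv2 i}"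
  have "3 \<le> card ?M" using neg by simp
  then obtain S where S: "S \<subseteq> ?M" "card S = 3" by (meson obtain_subset_with_card_n)
  then obtain x y z where xyz: "S = {x, y, z}" "x \<noteq> y" "y \<noteq> z" "x \<noteq> z"
    using card_3_iff[of S] by auto
  have "x \<in> ?M" "y \<in> ?M" "z \<in> ?M" using S xyz by auto
  hence "\<exists>i. i \<in> H \<and> succ2 n t Y H adv1 adv2 i \<and> w i = x"
    "\<exists>i. i \<in> H \<and> succ2 n t Y H adv1 adv2 i \<and> w i = y"
    "\<exists>i. i \<in> H \<and> succ2 n t Y H adv1 adv2 i \<and> w i = z"
    unfolding Y_def by blast+
  then obtain i1 i2 i3 where i1: "i1 \<in> H" "succ2 n t Y H adv1 adv2 i1" "w i1 = x"
    and i2: "i2 \<in> H" "succ2 n t Y H adv1 adv2 i2" "w i2 = y"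
    and i3: "i3 \<in> H" "succ2 n t Y H adv1 adv2 i3" "w i3 = z" by blast
  have s1: "succ1 n t Y H adv1 i1" "succ1 n t Y H adv1 i2" "succ1 n t Y H adv1 i3"
    using i1 i2 i3 unfolding succ2_def by auto
  have L1: "n - t \<le> card (T i1) + d" using lowT i1(1) s1(1) by blast
  have L2: "n - t \<le> card (T i2) + d" using lowT i2(1) s1(2) by blast
  have L3: "n - t \<le> card (T i3) + d" using lowT i3(1) s1(3) by blast
  have I12: "card (T i1 \<inter> T i2) \<le> t div 5" using interT i1 i2 xyz K1 by simp
  have I13: "card (T i1 \<inter> T i3) \<le> t div 5" using interT i1 i3 xyz K1 by simp
  have I23: "card (T i2 \<inter> T i3) \<le> t div 5" using interT i2 i3 xyz K1 by simp
  have "T i1 \<union> T i2 \<union> T i3 \<subseteq> H" unfolding T_def by auto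
  hence U: "card (T i1 \<union> T i2 \<union> T i3) \<le> card H" by (rule card_mono[OF finH])
  have C3: "card (T i1) + card (T i2) + card (T i3) \<le> card (T i1 \<union> T i2 \<union> T i3)
      + card (T i1 \<inter> T i2) + card (T i1 \<inter> T i3) + card (T i2 \<inter> T i3)"
    by (rule card3_union[OF finT finT finT])
  have dt: "d \<le> t" using assms(7) unfolding d_def .
  have "5 * (t div 5) \<le> t" by simp
  moreover have "3 * (n - t) \<le> card H + 3 * d + 3 * (t div 5)"
    using L1 L2 L3 I12 I13 I23 U C3 by linarith
  moreover hence "3 * (n - t) \<le> n + 2 * t + 3 * (t div 5)" using hd dt by linarith
  ultimately show False using assms(1) by linarith
qed

end
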